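(* Neither the complex tame Butcher group $\mathcal B^{\mathbb C}_{TM}$ nor the tame Butcher group $\mathcal B_{TM}$ is locally exponential, i.e. for neither group does the Lie group exponential map restrict to a diffeomorphism from an open $0$-neighbourhood in the Lie algebra onto an open $e$-neighbourhood. More precisely, for every $\varepsilon\in\mathbb R\setminus\{0\}$ the element $a_\varepsilon\in\mathcal B_{TM}$ is not in the image of $\exp_{\mathcal B_{TM}}$, while $\mathbb R\to\mathcal B_{TM}$, $\varepsilon\mapsto a_\varepsilon$ ($a_0:=e$) is a continuous curve through $e$; hence the image of $\exp_{\mathcal B_{TM}}$ contains no identity neighbourhood.
   Context: $\mathcal T_0$ is the set of rooted trees plus the empty tree $\emptyset$; $\bullet$ is the one-vertex tree; $|\tau|$ the number of vertices. $\mathcal B^{\mathbb C}_{TM}$ is the complex tame Butcher group: maps $a\colon\mathcal T_0\to\mathbb C$ with $a(\emptyset)=1$ and $|a(\tau)|\le CK^{|\tau|}$ for some $C,K>0$, with product $(a\cdot b)(\tau)=\sum_{s\in\mathrm{OST}(\tau)}b(s_\tau)\prod_{\theta\in\tau\setminus s}a(\theta)$ (sum over ordered subtrees) and unit $e$ ($e(\emptyset)=1$, else 0); $\mathcal B_{TM}$ its real-valued subgroup. They are analytic Lie groups modelled on the Silva spaces $M^*_{\mathbb K}=\{a\in\bigcup_k\mathbb K^{\mathcal T_0}(\omega_k)\mid a(\emptyset)=0\}$ (inductive limit of the Banach spaces $\mathbb K^{\mathcal T_0}(\omega_k)=\{a\mid\sup_\tau|a(\tau)|2^{-k|\tau|}<\infty\}$)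 with global chart $a\mapsto a-e$. The Lie group exponential $\exp\colon\mathbf L(G)\to G$ is the map such that $t\mapsto\exp(tx)$ is a one-parameter group with derivative $x$ at $0$. For $\varepsilon\in\mathbb R\setminus\{0\}$, $a_\varepsilon(\emptyset)=1$, $a_\varepsilon(\bullet)=\varepsilon$ and $a_\varepsilon(\tau)=0$ for all other trees $\tau$. *)

theory Defs
  imports "HOL-Analysis.Analysis" "HOL-Library.Multiset"
begin

text \<open>The set T_0 of rooted trees plus the empty tree is
  modelled by the type rtree option, with None the empty tree.\<close>

datatype rtree = Node "rtree multiset"

definition bullet :: rtree where "bullet = Node {#}"

primrec nverts :: "rtree \<Rightarrow> nat" where
  "nverts (Node M) = 1 + sum_mset (image_mset nverts M)"

definition tsize :: "rtree option \<Rightarrow> nat" where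
  "tsize t = (case t of None \<Rightarrow> 0 | Some \<tau> \<Rightarrow> nverts \<tau>)"

text \<open>For a non-empty subtree s of tau containing the root, we record the pair
  (s, tau minus s) where tau minus s is the multiset (forest) of trees obtained
  by removing the vertices of s.  Each subset of vertices (i.e. each ordered
  subtree) is listed once, so symmetric choices occur with multiplicity.
  For a child c of the root there are the choices: cut c entirely
  (contributing c to the forest), or keep a root-containing subtree of c.\<close>

definition child_opts ::
  "rtree \<Rightarrow> (rtree \<times> rtree multiset) multiset \<Rightarrow> (rtree option \<times> rtree multiset) multiset" where
  "child_opts c cs = {#(None, {#c#})#} + image_mset (\<lambda>(s, f). (Some s, f)) cs"

fun combine_list ::
  "(rtree option \<times> rtree multiset) multiset list \<Rightarrow> (rtree multiset \<times> rtree multiset) multiset" where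
  "combine_list [] = {#({#}, {#})#}"
| "combine_list (X # Xs) =
     sum_mset (image_mset (\<lambda>(o', f). image_mset (\<lambda>(S, F).
        ((case o' of None \<Rightarrow> {#} | Some s \<Rightarrow> {#s#}) + S, f + F)) (combine_list Xs)) X)"

definition combine ::
  "(rtree option \<times> rtree multiset) multiset multiset \<Rightarrow> (rtree multiset \<times> rtree multiset) multiset" where
  "combine M = combine_list (SOME xs. mset xs = M)"

primrec rcuts :: "rtree \<Rightarrow> (rtree \<times> rtree multiset) multiset" where
  "rcuts (Node M) = image_mset (\<lambda>(S, F). (Node S, F))
      (combine (image_mset (\<lambda>c. child_opts c (rcuts c)) M))"

text \<open>(a.b)(tau) = sum over ordered subtrees s of tau of b(s) * prod over theta in
  tau minus s of a(theta).  The empty subtree contributes b(empty) * a(tau).\<close>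

definition bmult :: "(rtree option \<Rightarrow> 'k::real_normed_field) \<Rightarrow> (rtree option \<Rightarrow> 'k) \<Rightarrow> rtree option \<Rightarrow> 'k" where
  "bmult a b t = (case t of None \<Rightarrow> b None
     | Some \<tau> \<Rightarrow> b None * a (Some \<tau>) +
         (\<Sum>(s, F) \<in># rcuts \<tau>. b (Some s) * (\<Prod>\<theta> \<in># F. a (Some \<theta>))))"

definition bunit :: "rtree option \<Rightarrow> 'k::real_normed_field" where
  "bunit t = (if t = None then 1 else 0)"

definition tame :: "(rtree option \<Rightarrow> 'k::real_normed_field) \<Rightarrow> bool" where
  "tame a \<longleftrightarrow> (\<exists>C K. C > 0 \<and> K > 0 \<and> (\<forall>t. norm (a t) \<le> C * K ^ tsize t))"

definition BTM :: "(rtree option \<Rightarrow> 'k::real_normed_field) set" where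
  "BTM = {a. a None = 1 \<and> tame a}"

definition wnorm :: "nat \<Rightarrow> (rtree option \<Rightarrow> 'k::real_normed_field) \<Rightarrow> real" where
  "wnorm k a = (SUP t. norm (a t) / 2 ^ (k * tsize t))"

definition Estep :: "nat \<Rightarrow> (rtree option \<Rightarrow> 'k::real_normed_field) set" where
  "Estep k = {a. a None = 0 \<and> bdd_above (range (\<lambda>t. norm (a t) / 2 ^ (k * tsize t)))}"

definition Mstar :: "(rtree option \<Rightarrow> 'k::real_normed_field) set" where
  "Mstar = (\<Union>k. Estep k)"

text \<open>Inductive limit topology: U is open iff its trace on every step Banach
  space is open for the weighted sup norm (for Silva spaces the locally convex
  inductive limit topology coincides with this final topology).\<close>
definition openM :: "(rtree option \<Rightarrow> 'k::real_normed_field) set \<Rightarrow> bool" where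
  "openM U \<longleftrightarrow> U \<subseteq> Mstar \<and>
     (\<forall>k. \<forall>a \<in> U \<inter> Estep k. \<exists>r>0. \<forall>b \<in> Estep k.
        wnorm k (\<lambda>t. b t - a t) < r \<longrightarrow> b \<in> U)"

definition tendstoM :: "('x \<Rightarrow> rtree option \<Rightarrow> 'k::real_normed_field) \<Rightarrow> (rtree option \<Rightarrow> 'k) \<Rightarrow> 'x filter \<Rightarrow> bool" where
  "tendstoM f x F \<longleftrightarrow> (\<forall>U. openM U \<longrightarrow> x \<in> U \<longrightarrow> eventually (\<lambda>y. f y \<in> U) F)"

definition chart :: "(rtree option \<Rightarrow> 'k::real_normed_field) \<Rightarrow> rtree option \<Rightarrow> 'k" where
  "chart a = (\<lambda>t. a t - bunit t)"

definition openG :: "(rtree option \<Rightarrow> 'k::real_normed_field) set \<Rightarrow> bool" where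
  "openG V \<longleftrightarrow> V \<subseteq> BTM \<and> openM (chart ` V)"

definition has_derivM :: "(real \<Rightarrow> rtree option \<Rightarrow> 'k::real_normed_field) \<Rightarrow> (rtree option \<Rightarrow> 'k) \<Rightarrow> real \<Rightarrow> bool" where
  "has_derivM c v t \<longleftrightarrow>
     tendstoM (\<lambda>h. \<lambda>s. inverse h *\<^sub>R (c (t + h) s - c t s)) v (at 0)"

definition C1M :: "(real \<Rightarrow> rtree option \<Rightarrow> 'k::real_normed_field) \<Rightarrow> bool" where
  "C1M c \<longleftrightarrow> (\<forall>t. c t \<in> Mstar) \<and>
     (\<exists>c'. (\<forall>t. c' t \<in> Mstar \<and> has_derivM c (c' t) t) \<and> (\<forall>t. tendstoM c' (c' t) (at t)))"

text \<open>x is mapped to g by the Lie group exponential: there is a (C^1, hence smooth)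
  one-parameter group gamma with derivative x at 0 and gamma(1) = g.\<close>
definition lie_exp_rel :: "(rtree option \<Rightarrow> 'k::real_normed_field) \<Rightarrow> (rtree option \<Rightarrow> 'k) \<Rightarrow> bool" where
  "lie_exp_rel x g \<longleftrightarrow> x \<in> Mstar \<and> (\<exists>\<gamma>.
      (\<forall>t. \<gamma> t \<in> BTM) \<and> \<gamma> 0 = bunit \<and> (\<forall>s t. \<gamma> (s + t) = bmult (\<gamma> s) (\<gamma> t)) \<and>
      C1M (\<lambda>t. chart (\<gamma> t)) \<and> has_derivM (\<lambda>t. chart (\<gamma> t)) x 0 \<and> \<gamma> 1 = g)"

definition exp_image :: "(rtree option \<Rightarrow> 'k::real_normed_field) set" where
  "exp_image = {g. \<exists>x. lie_exp_rel x g}"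

definition aeps :: "real \<Rightarrow> rtree option \<Rightarrow> 'k::real_normed_field" where
  "aeps \<epsilon> t = (case t of None \<Rightarrow> 1 | Some \<tau> \<Rightarrow> if \<tau> = bullet then of_real \<epsilon> else 0)"

end

theory Submission
  imports Defs
begin

definition bushy :: "nat \<Rightarrow> rtree" where
  "bushy n = Node (replicate_mset n bullet)"

lemma bushy0: "bushy 0 = bullet" by (simp add: bushy_def bullet_def)

lemma rcuts_bullet: "rcuts bullet = {#(bullet, {#})#}"
  by (simp add: bullet_def combine_def)

definition XB :: "(rtree option \<times> rtree multiset) multiset" where
  "XB = {#(None, {#bullet#}), (Some bullet, {#})#}"

lemma combine_rep: "combine (replicate_mset n X) = combine_list (replicate n X)"
proof -
  have "(SOME xs. mset xs = replicate_mset n X) = replicate n X"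
  proof (rule someI2[of _ "replicate n X"])
    show "mset (replicate n X) = replicate_mset n X" by simp
  next
    fix xs assume h: "mset xs = replicate_mset n X"
    then have "length xs = n" by (metis size_mset size_replicate_mset)
    moreover have "set xs \<subseteq> {X}" using h by (metis set_mset_mset set_mset_replicate_mset_subset subset_singletonD subset_refl empty_subsetI insert_subset singletonI)
    ultimately show "xs = replicate n X" by (metis replicate_eqI singletonD subsetD)
  qed
  then show ?thesis by (simp add: combine_def)
qed

lemma pascal_sum:
  fixes \<psi> :: "nat \<Rightarrow> 'a::comm_semiring_1"
  shows "(\<Sum>j\<le>Suc n. of_nat (Suc n choose j) * \<psi> j) =
     (\<Sum>j\<le>n. of_nat (n choose j) * \<psi> j) + (\<Sum>j\<le>n. of_nat (n choose j) * \<psi> (Suc j))"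
proof -
  have "(\<Sum>j\<le>Suc n. of_nat (Suc n choose j) * \<psi> j) = \<psi> 0 + (\<Sum>j\<le>n. of_nat (Suc n choose Suc j) * \<psi> (Suc j))"
    by (subst sum.atMost_Suc_shift) simp
  also have "\<dots> = \<psi> 0 + (\<Sum>j\<le>n. of_nat (n choose Suc j) * \<psi> (Suc j)) + (\<Sum>j\<le>n. of_nat (n choose j) * \<psi> (Suc j))"
    by (simp add: sum.distrib algebra_simps)
  also have "\<psi> 0 + (\<Sum>j\<le>n. of_nat (n choose Suc j) * \<psi> (Suc j)) = (\<Sum>j\<le>n. of_nat (n choose j) * \<psi> j)"
  proof (cases n)
    case 0 then show ?thesis by simp
  next
    case (Suc m)
    have "(\<Sum>j\<le>n. of_nat (n choose j) * \<psi> j) = \<psi> 0 + (\<Sum>j\<le>m. of_nat (n choose Suc j) * \<psi> (Suc j))"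
      unfolding Suc by (simp only: sum.atMost_Suc_shift) simp
    moreover have "(\<Sum>j\<le>n. of_nat (n choose Suc j) * \<psi> (Suc j)) = (\<Sum>j\<le>m. of_nat (n choose Suc j) * \<psi> (Suc j))"
      unfolding Suc by (simp only: sum.atMost_Suc binomial_eq_0 lessI of_nat_0 mult_zero_left add_0_right)
    ultimately show ?thesis by simp
  qed
  finally show ?thesis .
qed

lemma combine_list_rep_sum:
  fixes \<phi> :: "rtree multiset \<times> rtree multiset \<Rightarrow> 'a::comm_semiring_1"
  shows "sum_mset (image_mset \<phi> (combine_list (replicate n XB))) =
    (\<Sum>j\<le>n. of_nat (n choose j) * \<phi> (replicate_mset j bullet, replicate_mset (n - j) bullet))"
proof (induction n arbitrary: \<phi>)
  case 0
  then show ?case by simp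
next
  case (Suc n)
  have e: "combine_list (replicate (Suc n) XB) =
     image_mset (\<lambda>(S, F). (S, add_mset bullet F)) (combine_list (replicate n XB)) +
     image_mset (\<lambda>(S, F). (add_mset bullet S, F)) (combine_list (replicate n XB))"
    by (simp add: XB_def)
  have s1: "sum_mset (image_mset \<phi> (image_mset (\<lambda>(S, F). (S, add_mset bullet F)) (combine_list (replicate n XB))))
     = (\<Sum>j\<le>n. of_nat (n choose j) * \<phi> (replicate_mset j bullet, replicate_mset (Suc n - j) bullet))"
    using Suc.IH[of "\<lambda>(S, F). \<phi> (S, add_mset bullet F)"]
    by (simp add: multiset.map_comp o_def case_prod_unfold Suc_diff_le)
  have s2: "sum_mset (image_mset \<phi> (image_mset (\<lambda>(S, F). (add_mset bullet S, F)) (combine_list (replicate n XB))))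
     = (\<Sum>j\<le>n. of_nat (n choose j) * \<phi> (replicate_mset (Suc j) bullet, replicate_mset (Suc n - Suc j) bullet))"
    using Suc.IH[of "\<lambda>(S, F). \<phi> (add_mset bullet S, F)"]
    by (simp add: multiset.map_comp o_def case_prod_unfold)
  show ?case
    unfolding e image_mset_union sum_mset.union s1 s2
    by (rule pascal_sum[symmetric, where \<psi>="\<lambda>j. \<phi> (replicate_mset j bullet, replicate_mset (Suc n - j) bullet)"])
qed

lemma rcuts_bushy_sum:
  fixes \<phi> :: "rtree \<Rightarrow> rtree multiset \<Rightarrow> 'a::comm_semiring_1"
  shows "(\<Sum>(s, F) \<in># rcuts (bushy n). \<phi> s F) =
    (\<Sum>j\<le>n. of_nat (n choose j) * \<phi> (bushy j) (replicate_mset (n - j) bullet))"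
proof -
  have X: "child_opts bullet (rcuts bullet) = XB"
    by (simp add: child_opts_def rcuts_bullet XB_def)
  have "rcuts (bushy n) = image_mset (\<lambda>(S, F). (Node S, F)) (combine_list (replicate n XB))"
    by (simp add: bushy_def X combine_rep)
  then show ?thesis
    using combine_list_rep_sum[of "\<lambda>(S, F). \<phi> (Node S) F" n]
    by (simp add: multiset.map_comp o_def case_prod_unfold bushy_def)
qed

lemma coord_tendsto:
  fixes x :: "rtree option \<Rightarrow> 'k::real_normed_field"
  assumes xM: "x \<in> Mstar" and T: "tendstoM f x F"
  shows "((\<lambda>y. f y \<tau>) \<longlongrightarrow> x \<tau>) F"
proof (rule tendstoI)
  fix \<delta> :: real assume \<delta>: "\<delta> > 0"
  define U where "U = {b \<in> Mstar. dist (b \<tau>) (x \<tau>) < \<delta>}"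
  have "openM U"
    unfolding openM_def
  proof (intro conjI allI ballI)
    show "U \<subseteq> Mstar" by (auto simp: U_def)
  next
    fix k a assume a: "a \<in> U \<inter> Estep k"
    define w where "w = (2::real) ^ (k * tsize \<tau>)"
    have w: "w > 0" by (simp add: w_def)
    define r where "r = (\<delta> - dist (a \<tau>) (x \<tau>)) / w"
    have r: "r > 0" using a w by (auto simp: U_def r_def)
    show "\<exists>r>0. \<forall>b\<in>Estep k. wnorm k (\<lambda>t. b t - a t) < r \<longrightarrow> b \<in> U"
    proof (intro exI[of _ r] conjI r ballI impI)
      fix b assume b: "b \<in> Estep k" and lt: "wnorm k (\<lambda>t. b t - a t) < r"
      obtain Ba where Ba: "\<And>t. norm (a t) / 2 ^ (k * tsize t) \<le> Ba"
        using a by (auto simp: Estep_def bdd_above_def)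
      obtain Bb where Bb: "\<And>t. norm (b t) / 2 ^ (k * tsize t) \<le> Bb"
        using b by (auto simp: Estep_def bdd_above_def)
      have "bdd_above (range (\<lambda>t. norm (b t - a t) / 2 ^ (k * tsize t)))"
      proof (rule bdd_aboveI2)
        fix t
        have "norm (b t - a t) / 2 ^ (k * tsize t) \<le> (norm (b t) + norm (a t)) / 2 ^ (k * tsize t)"
          by (intro divide_right_mono norm_triangle_ineq4) simp
        also have "\<dots> \<le> Bb + Ba" using Ba[of t] Bb[of t] by (simp add: add_divide_distrib)
        finally show "norm (b t - a t) / 2 ^ (k * tsize t) \<le> Bb + Ba" .
      qed
      then have "norm (b \<tau> - a \<tau>) / w \<le> wnorm k (\<lambda>t. b t - a t)"
        unfolding wnorm_def w_def by (rule cSUP_upper[OF UNIV_I])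
      then have "norm (b \<tau> - a \<tau>) / w < r" using lt by simp
      then have "norm (b \<tau> - a \<tau>) < \<delta> - dist (a \<tau>) (x \<tau>)"
        using w by (simp add: r_def divide_strict_right_mono_neg pos_divide_less_eq)
      then have "dist (b \<tau>) (x \<tau>) < \<delta>"
        using dist_triangle[of "b \<tau>" "x \<tau>" "a \<tau>"] by (simp add: dist_norm)
      moreover have "b \<in> Mstar" using b by (auto simp: Mstar_def)
      ultimately show "b \<in> U" by (simp add: U_def)
    qed
  qed
  moreover have "x \<in> U" using xM \<delta> by (simp add: U_def)
  ultimately have "eventually (\<lambda>y. f y \<in> U) F" using T by (simp add: tendstoM_def)
  then show "eventually (\<lambda>y. dist (f y \<tau>) (x \<tau>) < \<delta>) F"
    by (rule eventually_mono) (simp add: U_def)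
qed

lemma vd_from_quot:
  fixes f :: "real \<Rightarrow> 'a::real_normed_vector"
  assumes "((\<lambda>h. inverse h *\<^sub>R (f (t + h) - f t)) \<longlongrightarrow> D) (at 0)"
  shows "(f has_vector_derivative D) (at t)"
  unfolding has_vector_derivative_def has_derivative_at
proof (intro conjI)
  show "bounded_linear (\<lambda>h. h *\<^sub>R D)" by (rule bounded_linear_scaleR_left)
  have "((\<lambda>h. norm (inverse h *\<^sub>R (f (t + h) - f t) - D)) \<longlongrightarrow> 0) (at 0)"
    using tendsto_norm_zero[OF LIM_zero[OF assms]] .
  moreover have "eventually (\<lambda>h. norm (inverse h *\<^sub>R (f (t + h) - f t) - D) =
      norm (f (t + h) - f t - h *\<^sub>R D) / norm h) (at (0::real))"
  proof (rule eventually_mono[OF eventually_neq_at_within[of 0 0 UNIV]])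
    fix h :: real assume h: "h \<noteq> 0"
    have "inverse h *\<^sub>R (f (t + h) - f t) - D = inverse h *\<^sub>R (f (t + h) - f t - h *\<^sub>R D)"
      using h by (simp add: scaleR_diff_right)
    then show "norm (inverse h *\<^sub>R (f (t + h) - f t) - D) = norm (f (t + h) - f t - h *\<^sub>R D) / norm h"
      by (simp add: divide_inverse mult.commute abs_inverse)
  qed
  ultimately show "(\<lambda>h. norm (f (t + h) - f t - h *\<^sub>R D) / norm h) \<midarrow>0\<rightarrow> 0"
    by (rule Lim_transform_eventually)
qed

lemma bushy_neq: "n \<ge> 1 \<Longrightarrow> bushy n \<noteq> bullet"
  by (cases n) (auto simp: bushy_def bullet_def)

lemma exp_rel_bushy:
  fixes x :: "rtree option \<Rightarrow> 'k::real_normed_field"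
  assumes "lie_exp_rel x (aeps \<epsilon>)"
  shows "x (Some bullet) = of_real \<epsilon> \<and>
    (\<forall>n\<ge>1. (\<Sum>j\<le>n. (real (n choose j) / real (n - j + 1)) *\<^sub>R (x (Some (bushy j)) * (of_real \<epsilon>) ^ (n - j))) = 0)"
proof -
  obtain \<gamma> where BT: "\<And>t. \<gamma> t \<in> BTM" and g0: "\<gamma> 0 = bunit"
    and grp: "\<And>s t. \<gamma> (s + t) = bmult (\<gamma> s) (\<gamma> t)"
    and D: "has_derivM (\<lambda>t. chart (\<gamma> t)) x 0" and g1: "\<gamma> 1 = aeps \<epsilon>"
    and xM: "x \<in> Mstar"
    using assms unfolding lie_exp_rel_def by blast
  have lim: "((\<lambda>h. inverse h *\<^sub>R \<gamma> h (Some \<tau>)) \<longlongrightarrow> x (Some \<tau>)) (at 0)" for \<tau>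
    using coord_tendsto[OF xM D[unfolded has_derivM_def], of "Some \<tau>"]
    by (simp add: chart_def g0 bunit_def)
  define g where "g n t = \<gamma> t (Some (bushy n))" for n t
  define xs where "xs j = x (Some (bushy j))" for j
  have gz: "g n 0 = 0" for n by (simp add: g_def g0 bunit_def)
  have ode: "(g n has_vector_derivative (\<Sum>j\<le>n. of_nat (n choose j) * xs j * g 0 t ^ (n - j))) (at t)" for n t
  proof (rule vd_from_quot)
    have incr: "g n (t + h) - g n t = (\<Sum>j\<le>n. of_nat (n choose j) * g j h * g 0 t ^ (n - j))" for h
    proof -
      have "\<gamma> h None = 1" using BT[of h] by (simp add: BTM_def)
      then have "g n (t + h) = g n t +
         (\<Sum>(s, F) \<in># rcuts (bushy n). \<gamma> h (Some s) * (\<Prod>\<theta> \<in># F. \<gamma> t (Some \<theta>)))"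
        by (simp add: g_def grp bmult_def)
      also have "(\<Sum>(s, F) \<in># rcuts (bushy n). \<gamma> h (Some s) * (\<Prod>\<theta> \<in># F. \<gamma> t (Some \<theta>)))
          = (\<Sum>j\<le>n. of_nat (n choose j) * g j h * g 0 t ^ (n - j))"
        by (subst rcuts_bushy_sum) (simp add: g_def bushy0 mult.assoc)
      finally show ?thesis by simp
    qed
    have "((\<lambda>h. (\<Sum>j\<le>n. of_nat (n choose j) * (inverse h *\<^sub>R g j h) * g 0 t ^ (n - j))) \<longlongrightarrow>
        (\<Sum>j\<le>n. of_nat (n choose j) * xs j * g 0 t ^ (n - j))) (at 0)"
      by (intro tendsto_intros) (simp add: g_def xs_def lim)
    moreover have "inverse h *\<^sub>R (g n (t + h) - g n t) =
        (\<Sum>j\<le>n. of_nat (n choose j) * (inverse h *\<^sub>R g j h) * g 0 t ^ (n - j))" for h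
      by (simp add: incr scaleR_sum_right)
    ultimately show "((\<lambda>h. inverse h *\<^sub>R (g n (t + h) - g n t)) \<longlongrightarrow>
        (\<Sum>j\<le>n. of_nat (n choose j) * xs j * g 0 t ^ (n - j))) (at 0)"
      by simp
  qed
  have g0t: "g 0 t = t *\<^sub>R xs 0" for t
  proof -
    have "((\<lambda>t. g 0 t - t *\<^sub>R xs 0) has_vector_derivative 0) (at t)" for t
    proof -
      have "((\<lambda>t. t *\<^sub>R xs 0) has_vector_derivative (1 *\<^sub>R xs 0)) (at t)"
        using has_vector_derivative_scaleR[OF DERIV_ident has_vector_derivative_const[where c="xs 0"], of t UNIV] by simp
      from has_vector_derivative_diff[OF ode[of 0 t] this] show ?thesis by simp
    qed
    then obtain c where "\<And>t. g 0 t - t *\<^sub>R xs 0 = c"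
      using has_vector_derivative_zero_constant[of UNIV "\<lambda>t. g 0 t - t *\<^sub>R xs 0"] by auto
    from this[of t] this[of 0] show ?thesis by (simp add: gz)
  qed
  have x0: "xs 0 = of_real \<epsilon>"
    using g0t[of 1] by (simp add: g_def g1 aeps_def bushy0)
  have main: "(\<Sum>j\<le>n. (real (n choose j) / real (n - j + 1)) *\<^sub>R (xs j * (of_real \<epsilon>) ^ (n - j))) = 0"
    if n: "n \<ge> 1" for n
  proof -
    define P where "P t = (\<Sum>j\<le>n. (real (n choose j) * t ^ (n - j + 1) / real (n - j + 1)) *\<^sub>R (xs j * xs 0 ^ (n - j)))" for t
    have dP: "(P has_vector_derivative (\<Sum>j\<le>n. of_nat (n choose j) * xs j * g 0 t ^ (n - j))) (at t)" for t
    proof -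
      have d1: "((\<lambda>t. real (n choose j) * t ^ (n - j + 1) / real (n - j + 1)) has_real_derivative
               (real (n choose j) * t ^ (n - j))) (at t)" for j
      proof -
        have "((\<lambda>t. t ^ Suc (n - j)) has_real_derivative real (Suc (n - j)) * t ^ (n - j)) (at t)"
          using DERIV_pow[of "Suc (n - j)" t] by simp
        from DERIV_cmult[OF this, of "real (n choose j) / real (Suc (n - j))"]
        show ?thesis by (simp add: field_simps del: of_nat_Suc)
      qed
      have "(P has_vector_derivative (\<Sum>j\<le>n. (real (n choose j) * t ^ (n - j)) *\<^sub>R (xs j * xs 0 ^ (n - j)))) (at t)"
        unfolding P_def
        by (intro has_vector_derivative_sum has_vector_derivative_eq_rhs[OF has_vector_derivative_scaleR[OF d1 has_vector_derivative_const]]) simp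
      moreover have "(real (n choose j) * t ^ (n - j)) *\<^sub>R (xs j * xs 0 ^ (n - j)) = of_nat (n choose j) * xs j * g 0 t ^ (n - j)" for j
        by (simp add: g0t scaleR_conv_of_real power_mult_distrib)
      ultimately show ?thesis by simp
    qed
    have "((\<lambda>t. g n t - P t) has_vector_derivative 0) (at t)" for t
      using has_vector_derivative_diff[OF ode[of n t] dP[of t]] by simp
    then obtain c where c: "\<And>t. g n t - P t = c"
      using has_vector_derivative_zero_constant[of UNIV "\<lambda>t. g n t - P t"] by auto
    have "P 0 = 0" by (simp add: P_def)
    then have "g n 1 = P 1" using c[of 0] c[of 1] gz[of n] by simp
    moreover have "g n 1 = 0" using bushy_neq[OF n] by (simp add: g_def g1 aeps_def)
    ultimately show ?thesis by (simp add: P_def x0)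
  qed
  show ?thesis using x0 main by (simp add: xs_def bushy0)
qed

lemma no_seq:
  fixes u :: "nat \<Rightarrow> complex" and e :: real
  assumes e: "e \<noteq> 0" and u0: "u 0 = of_real e"
    and rec: "\<forall>n\<ge>1. (\<Sum>j\<le>n. (real (n choose j) / real (n - j + 1)) *\<^sub>R (u j * (of_real e) ^ (n - j))) = 0"
    and bd: "\<And>j. norm (u j) \<le> B * K ^ j"
  shows False
proof -
  define z :: complex where "z = 2 * of_real pi * \<i> / of_real e"
  define w :: complex where "w = 2 * of_real pi * \<i>"
  have wz: "w = of_real e * z" using e by (simp add: z_def w_def)
  have w0: "w \<noteq> 0" by (simp add: w_def)
  define a where "a j = u j * z ^ j / fact j" for j
  define b where "b m = w ^ m / fact (Suc m)" for m
  have sa: "summable (\<lambda>j. norm (a j))"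
  proof (rule summable_comparison_test')
    show "summable (\<lambda>j. B * (inverse (fact j) * (K * norm z) ^ j))"
      by (intro summable_mult summable_exp)
    fix j :: nat
    have "norm (a j) = norm (u j) * norm z ^ j / fact j"
      by (simp add: a_def norm_mult norm_divide norm_power norm_fact)
    also have "\<dots> \<le> B * K ^ j * norm z ^ j / fact j"
      by (intro divide_right_mono mult_right_mono bd) auto
    also have "\<dots> = B * (inverse (fact j) * (K * norm z) ^ j)"
      by (simp add: power_mult_distrib divide_inverse)
    finally show "norm (norm (a j)) \<le> B * (inverse (fact j) * (K * norm z) ^ j)" by simp
  qed
  have sb: "summable (\<lambda>m. norm (b m))"
  proof (rule summable_comparison_test')
    show "summable (\<lambda>m. inverse (fact m) * norm w ^ m)" by (rule summable_exp)
    fix m :: nat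
    have "norm (b m) = norm w ^ m / fact (Suc m)"
      by (simp add: b_def norm_divide norm_power norm_fact del: fact_Suc)
    also have "\<dots> \<le> norm w ^ m / fact m"
      by (intro divide_left_mono) (auto simp: fact_mono)
    finally show "norm (norm (b m)) \<le> inverse (fact m) * norm w ^ m" by (simp add: divide_inverse mult.commute)
  qed
  have bsum: "b sums 0"
  proof -
    have "(\<lambda>n. w ^ n /\<^sub>R fact n) sums exp w" by (rule exp_converges)
    then have "(\<lambda>n. w ^ Suc n /\<^sub>R fact (Suc n)) sums (exp w - 1)"
      by (subst sums_Suc_iff) simp
    moreover have "exp w = 1" by (simp add: w_def)
    ultimately have "(\<lambda>n. w ^ Suc n /\<^sub>R fact (Suc n)) sums 0" by simp
    then have "(\<lambda>n. inverse w * (w ^ Suc n /\<^sub>R fact (Suc n))) sums (inverse w * 0)"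
      by (rule sums_mult)
    moreover have "inverse w * (w ^ Suc n /\<^sub>R fact (Suc n)) = b n" for n
      using w0 by (simp add: b_def scaleR_conv_of_real divide_inverse)
    ultimately show ?thesis by simp
  qed
  have C: "(\<lambda>k. \<Sum>i\<le>k. a i * b (k - i)) sums ((\<Sum>k. a k) * (\<Sum>k. b k))"
    by (rule Cauchy_product_sums[OF sa sb])
  have termeq: "a i * b (k - i) = z ^ k / fact k * ((real (k choose i) / real (k - i + 1)) *\<^sub>R (u i * (of_real e) ^ (k - i)))"
    if ik: "i \<le> k" for i k
  proof -
    have zk: "z ^ k = z ^ i * z ^ (k - i)" using ik by (simp flip: power_add)
    have f: "fact (Suc (k - i)) = (of_nat (Suc (k - i)) :: complex) * fact (k - i)" by simp
    have bf: "(of_nat (k choose i) :: complex) = fact k / (fact i * fact (k - i))"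
      by (rule binomial_fact[OF ik])
    show ?thesis
      unfolding a_def b_def wz scaleR_conv_of_real of_real_divide of_real_of_nat_eq bf zk f
      by (simp add: field_simps power_mult_distrib del: of_nat_Suc)
  qed
  have cval: "(\<Sum>i\<le>k. a i * b (k - i)) = (if k = 0 then of_real e else 0)" for k
  proof (cases "k = 0")
    case True then show ?thesis by (simp add: a_def b_def u0)
  next
    case False
    have "(\<Sum>i\<le>k. a i * b (k - i)) = z ^ k / fact k *
        (\<Sum>i\<le>k. (real (k choose i) / real (k - i + 1)) *\<^sub>R (u i * (of_real e) ^ (k - i)))"
      by (simp add: termeq sum_distrib_left)
    also have "\<dots> = 0" using rec False by simp
    finally show ?thesis using False by simp
  qed
  have "(\<lambda>k. if k = 0 then (of_real e :: complex) else 0) sums of_real e"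
    using sums_single[of 0 "\<lambda>_. of_real e :: complex"] by simp
  moreover from C have "(\<lambda>k. if k = 0 then (of_real e :: complex) else 0) sums 0"
    using sums_unique[OF bsum] by (simp add: cval)
  ultimately have "(of_real e :: complex) = 0" by (rule sums_unique2)
  with e show False by simp
qed

lemma aeps_BTM: "(aeps \<epsilon> :: rtree option \<Rightarrow> 'k::real_normed_field) \<in> BTM"
proof -
  have "norm (aeps \<epsilon> t :: 'k) \<le> (1 + \<bar>\<epsilon>\<bar>) * 1 ^ tsize t" for t
    by (cases t) (auto simp: aeps_def)
  then have "tame (aeps \<epsilon> :: rtree option \<Rightarrow> 'k)" unfolding tame_def
    by (intro exI[of _ "1 + \<bar>\<epsilon>\<bar>"] exI[of _ "1::real"]) simp
  then show ?thesis unfolding BTM_def by (simp add: aeps_def)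
qed

lemma aeps0: "(aeps 0 :: rtree option \<Rightarrow> 'k::real_normed_field) = bunit"
  by (rule ext) (auto simp: aeps_def bunit_def split: option.splits)

lemma tsize_bushy: "tsize (Some (bushy j)) = Suc j"
  by (simp add: tsize_def bushy_def bullet_def)

lemma Mstar_bound:
  fixes x :: "rtree option \<Rightarrow> 'k::real_normed_field"
  assumes "x \<in> Mstar"
  obtains B K where "\<And>j. norm (x (Some (bushy j))) \<le> B * K ^ j"
proof -
  obtain k where "x \<in> Estep k" using assms by (auto simp: Mstar_def)
  then obtain Bx where Bx: "\<And>t. norm (x t) / 2 ^ (k * tsize t) \<le> Bx"
    by (auto simp: Estep_def bdd_above_def)
  have "norm (x (Some (bushy j))) \<le> (Bx * 2 ^ k) * (2 ^ k) ^ j" for j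
  proof -
    have "norm (x (Some (bushy j))) \<le> Bx * 2 ^ (k * Suc j)"
      using Bx[of "Some (bushy j)"] by (simp add: tsize_bushy pos_divide_le_eq)
    also have "\<dots> = (Bx * 2 ^ k) * (2 ^ k) ^ j"
      by (simp add: power_mult[symmetric] power_add mult.commute)
    finally show ?thesis .
  qed
  then show ?thesis using that by blast
qed

lemma not_exp_complex:
  assumes "\<epsilon> \<noteq> 0"
  shows "(aeps \<epsilon> :: rtree option \<Rightarrow> complex) \<notin> exp_image"
proof
  assume "aeps \<epsilon> \<in> (exp_image :: (rtree option \<Rightarrow> complex) set)"
  then obtain x :: "rtree option \<Rightarrow> complex" where r: "lie_exp_rel x (aeps \<epsilon>)"
    by (auto simp: exp_image_def)
  then have xM: "x \<in> Mstar" by (simp add: lie_exp_rel_def)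
  obtain B K where bd: "\<And>j. norm (x (Some (bushy j))) \<le> B * K ^ j"
    using Mstar_bound[OF xM] by blast
  show False
    using no_seq[of \<epsilon> "\<lambda>j. x (Some (bushy j))" B K] exp_rel_bushy[OF r] assms bd
    by (simp add: bushy0)
qed

lemma not_exp_real:
  assumes "\<epsilon> \<noteq> 0"
  shows "(aeps \<epsilon> :: rtree option \<Rightarrow> real) \<notin> exp_image"
proof
  assume "aeps \<epsilon> \<in> (exp_image :: (rtree option \<Rightarrow> real) set)"
  then obtain x :: "rtree option \<Rightarrow> real" where r: "lie_exp_rel x (aeps \<epsilon>)"
    by (auto simp: exp_image_def)
  then have xM: "x \<in> Mstar" by (simp add: lie_exp_rel_def)
  obtain B K where bd: "\<And>j. norm (x (Some (bushy j))) \<le> B * K ^ j"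
    using Mstar_bound[OF xM] by blast
  have E: "x (Some bullet) = \<epsilon>"
    "\<And>n. n \<ge> 1 \<Longrightarrow> (\<Sum>j\<le>n. (real (n choose j) / real (n - j + 1)) * (x (Some (bushy j)) * \<epsilon> ^ (n - j))) = 0"
    using exp_rel_bushy[OF r] by auto
  have rec: "\<forall>n\<ge>1. (\<Sum>j\<le>n. (real (n choose j) / real (n - j + 1)) *\<^sub>R
      (complex_of_real (x (Some (bushy j))) * (of_real \<epsilon>) ^ (n - j))) = 0"
  proof (intro allI impI)
    fix n :: nat assume n: "n \<ge> 1"
    have "complex_of_real (\<Sum>j\<le>n. (real (n choose j) / real (n - j + 1)) * (x (Some (bushy j)) * \<epsilon> ^ (n - j))) = 0"
      using E(2)[OF n] by simp
    then show "(\<Sum>j\<le>n. (real (n choose j) / real (n - j + 1)) *\<^sub>R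
      (complex_of_real (x (Some (bushy j))) * (of_real \<epsilon>) ^ (n - j))) = 0"
      by (simp add: scaleR_conv_of_real)
  qed
  show False
    using no_seq[of \<epsilon> "\<lambda>j. complex_of_real (x (Some (bushy j)))" B K] rec assms bd E(1)
    by (simp add: bushy0)
qed

lemma chart_aeps: "chart (aeps e :: rtree option \<Rightarrow> 'k::real_normed_field) t =
    (case t of None \<Rightarrow> 0 | Some \<tau> \<Rightarrow> if \<tau> = bullet then of_real e else 0)"
  by (cases t) (auto simp: chart_def aeps_def bunit_def)

lemma chart_aeps_Estep: "chart (aeps e :: rtree option \<Rightarrow> 'k::real_normed_field) \<in> Estep 0"
proof -
  have "norm (chart (aeps e :: rtree option \<Rightarrow> 'k) t) / 2 ^ (0 * tsize t) \<le> \<bar>e\<bar>" for t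
    by (cases t) (auto simp: chart_aeps)
  then have "bdd_above (range (\<lambda>t. norm (chart (aeps e :: rtree option \<Rightarrow> 'k) t) / 2 ^ (0 * tsize t)))"
    by (rule bdd_aboveI2)
  moreover have "chart (aeps e :: rtree option \<Rightarrow> 'k) None = 0" by (simp add: chart_aeps)
  ultimately show ?thesis unfolding Estep_def by blast
qed

lemma chart_inj: "chart a = chart b \<Longrightarrow> a = b"
proof (rule ext)
  fix t assume "chart a = chart b"
  then have "chart a t = chart b t" by simp
  then show "a t = b t" by (simp add: chart_def)
qed

lemma openG_aeps:
  assumes "openG V"
  shows "open {\<epsilon>. (aeps \<epsilon> :: rtree option \<Rightarrow> 'k::real_normed_field) \<in> V}"
  unfolding open_dist
proof (intro ballI)
  fix e0 assume "e0 \<in> {\<epsilon>. (aeps \<epsilon> :: rtree option \<Rightarrow> 'k) \<in> V}"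
  then have in0: "chart (aeps e0 :: rtree option \<Rightarrow> 'k) \<in> chart ` V \<inter> Estep 0"
    using chart_aeps_Estep by auto
  from assms have "openM (chart ` V)" by (simp add: openG_def)
  then obtain r where r: "r > 0" and H: "\<And>b. b \<in> Estep 0 \<Longrightarrow>
      wnorm 0 (\<lambda>t. b t - chart (aeps e0 :: rtree option \<Rightarrow> 'k) t) < r \<Longrightarrow> b \<in> chart ` V"
  proof -
    from \<open>openM (chart ` V)\<close> have "\<forall>a \<in> chart ` V \<inter> Estep 0. \<exists>r>0. \<forall>b \<in> Estep 0.
        wnorm 0 (\<lambda>t. b t - a t) < r \<longrightarrow> b \<in> chart ` V"
      unfolding openM_def by (elim conjE allE)
    from bspec[OF this in0] show ?thesis using that by blast
  qed
  show "\<exists>r>0. \<forall>y. dist y e0 < r \<longrightarrow> y \<in> {\<epsilon>. (aeps \<epsilon> :: rtree option \<Rightarrow> 'k) \<in> V}"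
  proof (intro exI[of _ r] conjI r allI impI)
    fix y assume y: "dist y e0 < r"
    have "wnorm 0 (\<lambda>t. chart (aeps y :: rtree option \<Rightarrow> 'k) t - chart (aeps e0) t) \<le> \<bar>y - e0\<bar>"
      unfolding wnorm_def
    proof (rule cSUP_least)
      fix t
      show "norm (chart (aeps y :: rtree option \<Rightarrow> 'k) t - chart (aeps e0) t) / 2 ^ (0 * tsize t) \<le> \<bar>y - e0\<bar>"
      proof (cases t)
        case None then show ?thesis by (simp add: chart_aeps)
      next
        case (Some \<tau>)
        have "norm (of_real y - of_real e0 :: 'k) = \<bar>y - e0\<bar>" by (metis norm_of_real of_real_diff)
        then show ?thesis using Some by (simp add: chart_aeps)
      qed
    qed simp
    then have "chart (aeps y :: rtree option \<Rightarrow> 'k) \<in> chart ` V"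
      using y by (intro H chart_aeps_Estep) (simp add: dist_real_def)
    then obtain v where "v \<in> V" "chart (aeps y :: rtree option \<Rightarrow> 'k) = chart v" by blast
    then show "y \<in> {\<epsilon>. (aeps \<epsilon> :: rtree option \<Rightarrow> 'k) \<in> V}"
      using chart_inj by fastforce
  qed
qed

lemma no_nbhd:
  assumes notexp: "\<And>\<epsilon>. \<epsilon> \<noteq> 0 \<Longrightarrow> (aeps \<epsilon> :: rtree option \<Rightarrow> 'k::real_normed_field) \<notin> exp_image"
  shows "\<not> (\<exists>V. openG V \<and> bunit \<in> V \<and> V \<subseteq> (exp_image :: (rtree option \<Rightarrow> 'k) set))"
proof
  assume "\<exists>V. openG V \<and> bunit \<in> V \<and> V \<subseteq> (exp_image :: (rtree option \<Rightarrow> 'k) set)"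
  then obtain V where V: "openG V" "bunit \<in> V" "V \<subseteq> (exp_image :: (rtree option \<Rightarrow> 'k) set)" by blast
  have "open {\<epsilon>. (aeps \<epsilon> :: rtree option \<Rightarrow> 'k) \<in> V}" by (rule openG_aeps[OF V(1)])
  moreover have "0 \<in> {\<epsilon>. (aeps \<epsilon> :: rtree option \<Rightarrow> 'k) \<in> V}" using V(2) by (simp add: aeps0)
  ultimately have "\<exists>r>0. \<forall>y. dist y 0 < r \<longrightarrow> y \<in> {\<epsilon>. (aeps \<epsilon> :: rtree option \<Rightarrow> 'k) \<in> V}"
    unfolding open_dist by (rule bspec)
  then obtain r where r: "r > 0" and r2: "\<forall>y. dist y 0 < r \<longrightarrow> y \<in> {\<epsilon>. (aeps \<epsilon> :: rtree option \<Rightarrow> 'k) \<in> V}"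
    by (elim exE conjE)
  have "dist (r/2) 0 < r" using r by (simp add: dist_real_def)
  then have "(aeps (r/2) :: rtree option \<Rightarrow> 'k) \<in> V" using r2 by simp
  then have "(aeps (r/2) :: rtree option \<Rightarrow> 'k) \<in> exp_image" using V(3) by (rule subsetD[rotated])
  moreover have "r/2 \<noteq> 0" using r by simp
  ultimately show False using notexp by blast
qed

theorem proposition5p6:
  shows "(\<forall>\<epsilon>::real. \<epsilon> \<noteq> 0 \<longrightarrow>
            (aeps \<epsilon> :: rtree option \<Rightarrow> real) \<in> BTM \<and> aeps \<epsilon> \<notin> (exp_image :: (rtree option \<Rightarrow> real) set))
      \<and> (aeps 0 :: rtree option \<Rightarrow> real) = bunit
      \<and> (\<forall>V. openG V \<longrightarrow> openin (euclidean :: real topology) {\<epsilon>. (aeps \<epsilon> :: rtree option \<Rightarrow> real) \<in> V})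
      \<and> \<not> (\<exists>V. openG V \<and> bunit \<in> V \<and> V \<subseteq> (exp_image :: (rtree option \<Rightarrow> real) set))
      \<and> \<not> (\<exists>V. openG V \<and> bunit \<in> V \<and> V \<subseteq> (exp_image :: (rtree option \<Rightarrow> complex) set))"
proof -
  have h1: "\<forall>\<epsilon>::real. \<epsilon> \<noteq> 0 \<longrightarrow>
            (aeps \<epsilon> :: rtree option \<Rightarrow> real) \<in> BTM \<and> aeps \<epsilon> \<notin> (exp_image :: (rtree option \<Rightarrow> real) set)"
  proof (rule allI, rule impI)
    fix \<epsilon> :: real assume e: "\<epsilon> \<noteq> 0"
    show "(aeps \<epsilon> :: rtree option \<Rightarrow> real) \<in> BTM \<and> aeps \<epsilon> \<notin> (exp_image :: (rtree option \<Rightarrow> real) set)"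
      by (rule conjI[OF aeps_BTM not_exp_real[OF e]])
  qed
  have h2: "(aeps 0 :: rtree option \<Rightarrow> real) = bunit" by (rule aeps0)
  have h3: "\<forall>V. openG V \<longrightarrow> openin (euclidean :: real topology) {\<epsilon>. (aeps \<epsilon> :: rtree option \<Rightarrow> real) \<in> V}"
  proof (rule allI, rule impI)
    fix V :: "(rtree option \<Rightarrow> real) set" assume "openG V"
    then have "open {\<epsilon>. (aeps \<epsilon> :: rtree option \<Rightarrow> real) \<in> V}" by (rule openG_aeps)
    then show "openin (euclidean :: real topology) {\<epsilon>. (aeps \<epsilon> :: rtree option \<Rightarrow> real) \<in> V}"
      by (simp only: open_openin)
  qed
  have h4: "\<not> (\<exists>V. openG V \<and> bunit \<in> V \<and> V \<subseteq> (exp_image :: (rtree option \<Rightarrow> real) set))"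
    by (rule no_nbhd[OF not_exp_real])
  have h5: "\<not> (\<exists>V. openG V \<and> bunit \<in> V \<and> V \<subseteq> (exp_image :: (rtree option \<Rightarrow> complex) set))"
    by (rule no_nbhd[OF not_exp_complex])
  show ?thesis by (intro conjI h1 h2 h3 h4 h5)
qed

end
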